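(* Let $T$ be a positive integer and let $\mathfrak{D}$ be a distribution over query–document pairs $(q,d)$. Suppose there is an unknown weight vector $w_*\in\mathbb{R}^T$, and that for each sampled pair $(q,d)$ one observes the feature vector $x_{(q,d)}$ together with the score $s_{(q,d)}=\langle w_*, x_{(q,d)}\rangle$. Let $$A=\mathbb{E}_{(q,d) \sim \mathfrak{D}} \left[ \tfrac{1}{\mathrm{len}(q)}\, x_{(q,d)}x_{(q,d)}^{\top} \right]\in\mathbb{R}^{T\times T},$$ and assume $\lambda_{\min}(A)>0$. Then there exist an absolute constant $C>0$ and an algorithm such that, for every $\delta\in(0,1)$, given $n \geq \frac{C}{\lambda_{\min}(A)} \log\left(\frac{T}{\delta}\right)$ pairs sampled i.i.d. from $\mathfrak{D}$ (with their observed feature vectors and scores), with probability at least $1-\delta$ the algorithm outputs exactly $w_*$.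
   Context: Tokens are elements of $[T]=\{1,\dots,T\}$. A query is a finite token sequence $q=(q_1,\dots,q_{\mathrm{len}(q)})$ and a document a finite token sequence $d=(d_1,\dots,d_{\mathrm{len}(d)})$. Fixed encoders assign unit vectors $E_q(q_i)\in\mathbb{R}^m$ to query token positions and $E_d(d_j)\in\mathbb{R}^m$ to document token positions. The feature vector $x_{(q,d)}\in\mathbb{R}^T$ has $t$-th coordinate equal to $\max_{j\in[\mathrm{len}(d)]} E_q(q_t)^\top E_d(d_j)$ if token $t$ occurs in $q$ (here $q_t$ denotes the occurrence of token $t$ in $q$), and $0$ otherwise. The paper models the Weighted Chamfer score with weights $w$ of the pair $(q,d)$ as the linear function $\langle w, x_{(q,d)}\rangle$; the observed scores are Weighted Chamfer scores with respect to the hidden weights $w_*$. $\lambda_{\min}$ denotes the smallest eigenvalue. *)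

theory Defs
  imports "HOL-Probability.Probability_Mass_Function" "Jordan_Normal_Form.Char_Poly"
begin

text \<open>Tokens are relabelled as 0,...,T-1 (instead of 1,...,T) to match 0-based
  vector indices. Queries and documents are token lists. Encoders are functions
  from tokens to real vectors of dimension m.\<close>

definition valid_pair :: "nat \<Rightarrow> nat list \<times> nat list \<Rightarrow> bool" where
  "valid_pair T qd \<longleftrightarrow> set (fst qd) \<subseteq> {..<T} \<and> set (snd qd) \<subseteq> {..<T} \<and> snd qd \<noteq> []"

definition feature ::
  "nat \<Rightarrow> (nat \<Rightarrow> real vec) \<Rightarrow> (nat \<Rightarrow> real vec) \<Rightarrow> nat list \<times> nat list \<Rightarrow> real vec" where
  "feature T Eq Ed qd = vec T (\<lambda>t.
     if t \<in> set (fst qd)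
     then Max ((\<lambda>j. Eq t \<bullet> Ed (snd qd ! j)) ` {..<length (snd qd)})
     else 0)"

definition moment_matrix ::
  "nat \<Rightarrow> (nat \<Rightarrow> real vec) \<Rightarrow> (nat \<Rightarrow> real vec) \<Rightarrow> (nat list \<times> nat list) pmf \<Rightarrow> real mat" where
  "moment_matrix T Eq Ed D = mat T T (\<lambda>(i, j).
     measure_pmf.expectation D (\<lambda>qd.
       (1 / real (length (fst qd))) * (feature T Eq Ed qd $ i) * (feature T Eq Ed qd $ j)))"

definition lambda_min :: "real mat \<Rightarrow> real" where
  "lambda_min A = Min {k. eigenvalue A k}"

end

theory Submission
  imports Defs
begin
definition dotT :: "nat \<Rightarrow> (nat \<Rightarrow> real) \<Rightarrow> (nat \<Rightarrow> real) \<Rightarrow> real" where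
  "dotT T u v = (\<Sum>i<T. u i * v i)"

definition ONL :: "nat \<Rightarrow> (nat \<Rightarrow> real) list \<Rightarrow> bool" where
  "ONL T U \<longleftrightarrow> (\<forall>k<length U. \<forall>l<length U. dotT T (U!k) (U!l) = (if k = l then 1 else 0))"

definition proj :: "nat \<Rightarrow> (nat \<Rightarrow> real) list \<Rightarrow> (nat \<Rightarrow> real) \<Rightarrow> nat \<Rightarrow> real" where
  "proj T U x = (\<lambda>i. x i - (\<Sum>k<length U. dotT T (U!k) x * (U!k) i))"

definition unitv :: "nat \<Rightarrow> nat \<Rightarrow> real" where
  "unitv i = (\<lambda>j. if j = i then 1 else 0)"

lemma dotT_comm: "dotT T u v = dotT T v u"
  unfolding dotT_def by (simp add: mult.commute)

lemma dotT_nonneg: "0 \<le> dotT T x x"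
  unfolding dotT_def by (intro sum_nonneg) simp

lemma dotT_zero: "dotT T x x = 0 \<Longrightarrow> i < T \<Longrightarrow> x i = 0"
  unfolding dotT_def by (subst (asm) sum_nonneg_eq_0_iff) auto

lemma dotT_unitv: "i < T \<Longrightarrow> dotT T x (unitv i) = x i"
  unfolding dotT_def unitv_def by (simp add: if_distrib sum.delta' cong: if_cong)

lemma dotT_proj: "dotT T v (proj T U x) = dotT T v x - (\<Sum>k<length U. dotT T (U!k) x * dotT T v (U!k))"
proof -
  have "dotT T v (proj T U x) = (\<Sum>i<T. v i * x i) - (\<Sum>i<T. \<Sum>k<length U. dotT T (U!k) x * (v i * (U!k) i))"
    unfolding dotT_def proj_def by (simp add: right_diff_distrib sum_subtractf sum_distrib_left mult_ac)
  also have "(\<Sum>i<T. \<Sum>k<length U. dotT T (U!k) x * (v i * (U!k) i)) = (\<Sum>k<length U. dotT T (U!k) x * dotT T v (U!k))"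
    by (subst sum.swap) (simp add: dotT_def sum_distrib_left)
  finally show ?thesis unfolding dotT_def by simp
qed

lemma sum_delta_real: assumes "l < (m::nat)" shows "(\<Sum>k<m. (c k :: real) * (if l = k then 1 else 0)) = c l"
proof -
  have "(\<Sum>k<m. (c k :: real) * (if l = k then 1 else 0)) = (\<Sum>k\<in>{..<m}. if l = k then c k else 0)"
    by (intro sum.cong) auto
  also have "\<dots> = c l" using assms by (subst sum.delta') auto
  finally show ?thesis .
qed

lemma dotT_unitv': "i < T \<Longrightarrow> dotT T (unitv i) x = x i"
  by (simp add: dotT_comm dotT_unitv)

lemma proj_orth: assumes "ONL T U" "l < length U" shows "dotT T (U!l) (proj T U x) = 0"
proof -
  have "(\<Sum>k<length U. dotT T (U!k) x * dotT T (U!l) (U!k)) = (\<Sum>k<length U. dotT T (U!k) x * (if l = k then 1 else 0))"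
    using assms unfolding ONL_def by (intro sum.cong) auto
  also have "\<dots> = dotT T (U!l) x" using assms(2) by (rule sum_delta_real)
  finally show ?thesis by (simp add: dotT_proj)
qed

lemma proj_perp: assumes "\<forall>k<length U. dotT T v (U!k) = 0" shows "dotT T v (proj T U x) = dotT T v x"
  using assms by (simp add: dotT_proj)

lemma proj_norm: assumes "ONL T U"
  shows "dotT T (proj T U x) (proj T U x) = dotT T x x - (\<Sum>k<length U. (dotT T (U!k) x)^2)"
proof -
  have "\<forall>k<length U. dotT T (proj T U x) (U!k) = 0"
    using proj_orth[OF assms] by (simp add: dotT_comm)
  hence "dotT T (proj T U x) (proj T U x) = dotT T (proj T U x) x" by (rule proj_perp)
  also have "\<dots> = dotT T x (proj T U x)" by (rule dotT_comm)
  also have "\<dots> = dotT T x x - (\<Sum>k<length U. (dotT T (U!k) x)^2)"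
    by (simp add: dotT_proj power2_eq_square dotT_comm)
  finally show ?thesis .
qed

lemma proj_sym: assumes "i < T" shows "proj T U x i = dotT T (proj T U (unitv i)) x"
proof -
  have "dotT T (proj T U (unitv i)) x = dotT T x (proj T U (unitv i))" by (rule dotT_comm)
  also have "\<dots> = x i - (\<Sum>k<length U. (U!k) i * dotT T (U!k) x)"
    by (simp add: dotT_proj dotT_unitv' dotT_unitv assms dotT_comm[of T x])
  finally show ?thesis unfolding proj_def by (simp add: mult.commute)
qed

lemma proj_trace: assumes "ONL T U"
  shows "(\<Sum>i<T. dotT T (proj T U (unitv i)) (proj T U (unitv i))) = real T - real (length U)"
proof -
  have "(\<Sum>i<T. dotT T (proj T U (unitv i)) (proj T U (unitv i))) = (\<Sum>i<T. 1 - (\<Sum>k<length U. ((U!k) i)^2))"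
  proof (intro sum.cong refl)
    fix i assume i: "i \<in> {..<T}"
    have "dotT T (unitv i) (unitv i) = 1" using i by (simp add: dotT_unitv) (simp add: unitv_def)
    then show "dotT T (proj T U (unitv i)) (proj T U (unitv i)) = 1 - (\<Sum>k<length U. ((U!k) i)^2)"
      using i by (simp add: proj_norm[OF assms] dotT_unitv dotT_unitv')
  qed
  also have "\<dots> = real T - (\<Sum>k<length U. \<Sum>i<T. ((U!k) i)^2)"
    by (simp add: sum_subtractf sum.swap[of _ "{..<T}"])
  also have "(\<Sum>k<length U. \<Sum>i<T. ((U!k) i)^2) = (\<Sum>k<length U. 1)"
    using assms unfolding ONL_def dotT_def by (intro sum.cong) (auto simp: power2_eq_square)
  finally show ?thesis by simp
qed

lemma ONL_length: assumes "ONL T U" shows "length U \<le> T"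
proof -
  have "0 \<le> (\<Sum>i<T. dotT T (proj T U (unitv i)) (proj T U (unitv i)))"
    by (intro sum_nonneg dotT_nonneg)
  thus ?thesis using proj_trace[OF assms] by simp
qed

lemma ONL_full: assumes "ONL T U" "length U = T" "\<forall>k<length U. dotT T v (U!k) = 0" "i < T"
  shows "v i = 0"
proof -
  have "(\<Sum>i<T. dotT T (proj T U (unitv i)) (proj T U (unitv i))) = 0"
    using proj_trace[OF assms(1)] assms(2) by simp
  hence "dotT T (proj T U (unitv i)) (proj T U (unitv i)) = 0"
    using assms(4) by (subst (asm) sum_nonneg_eq_0_iff) (auto intro: dotT_nonneg)
  hence "\<forall>j<T. proj T U (unitv i) j = 0" using dotT_zero by blast
  hence "dotT T v (proj T U (unitv i)) = 0" unfolding dotT_def by simp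
  moreover have "dotT T v (proj T U (unitv i)) = v i"
    using proj_perp[OF assms(3)] dotT_unitv[OF assms(4)] by simp
  ultimately show ?thesis by simp
qed

lemma proj_zero_perp: assumes "dotT T (proj T U x) (proj T U x) = 0" "\<forall>k<length U. dotT T v (U!k) = 0"
  shows "dotT T v x = 0"
proof -
  have "\<forall>j<T. proj T U x j = 0" using dotT_zero assms(1) by blast
  hence "dotT T v (proj T U x) = 0" unfolding dotT_def by simp
  thus ?thesis using proj_perp[OF assms(2)] by simp
qed

lemma ONL_extend: assumes "ONL T U" "dotT T (proj T U x) (proj T U x) \<noteq> 0"
  shows "ONL T (U @ [(\<lambda>i. proj T U x i / sqrt (dotT T (proj T U x) (proj T U x)))])"
proof -
  define d where "d = dotT T (proj T U x) (proj T U x)"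
  define u where "u = (\<lambda>i. proj T U x i / sqrt d)"
  have dpos: "d > 0" using assms(2) dotT_nonneg[of T "proj T U x"] unfolding d_def by linarith
  have uu: "dotT T u u = 1"
  proof -
    have "dotT T u u = d / (sqrt d)^2" unfolding u_def d_def dotT_def
      by (simp add: sum_divide_distrib power2_eq_square)
    thus ?thesis using dpos by simp
  qed
  have uk: "dotT T (U!k) u = 0" if "k < length U" for k
  proof -
    have "dotT T (U!k) u = dotT T (U!k) (proj T U x) / sqrt d" unfolding u_def dotT_def
      by (simp add: sum_divide_distrib)
    thus ?thesis using proj_orth[OF assms(1) that] by simp
  qed
  show ?thesis unfolding ONL_def u_def[symmetric] d_def[symmetric]
  proof (intro allI impI)
    fix k l assume k: "k < length (U @ [u])" and l: "l < length (U @ [u])"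
    show "dotT T ((U @ [u]) ! k) ((U @ [u]) ! l) = (if k = l then 1 else 0)"
    proof (cases "k < length U"; cases "l < length U")
      assume "k < length U" "l < length U"
      thus ?thesis using assms(1) unfolding ONL_def by (simp add: nth_append)
    next
      assume "k < length U" "\<not> l < length U"
      hence "l = length U" using l by simp
      thus ?thesis using uk[OF \<open>k < length U\<close>] \<open>k < length U\<close> by (simp add: nth_append)
    next
      assume "\<not> k < length U" "l < length U"
      hence "k = length U" using k by simp
      thus ?thesis using uk[OF \<open>l < length U\<close>] \<open>l < length U\<close> by (simp add: nth_append dotT_comm)
    next
      assume "\<not> k < length U" "\<not> l < length U"
      hence "k = length U" "l = length U" using k l by auto
      thus ?thesis using uu by (simp add: nth_append)
    qed
  qed
qed

definition qf :: "nat \<Rightarrow> real mat \<Rightarrow> (nat \<Rightarrow> real) \<Rightarrow> real" where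
  "qf n A v = (\<Sum>i<n. \<Sum>j<n. v i * A $$ (i,j) * v j)"

definition bf :: "nat \<Rightarrow> real mat \<Rightarrow> (nat \<Rightarrow> real) \<Rightarrow> (nat \<Rightarrow> real) \<Rightarrow> real" where
  "bf n A u v = (\<Sum>i<n. \<Sum>j<n. u i * A $$ (i,j) * v j)"

definition mv :: "nat \<Rightarrow> real mat \<Rightarrow> (nat \<Rightarrow> real) \<Rightarrow> nat \<Rightarrow> real" where
  "mv n A v = (\<lambda>i. \<Sum>j<n. A $$ (i,j) * v j)"

lemma discr: fixes a b c :: real
  assumes "\<forall>t. 0 \<le> a + 2 * t * b + t^2 * c" "0 \<le> c"
  shows "b^2 \<le> a*c"
proof (cases "c = 0")
  case True
  show ?thesis
  proof (cases "b = 0")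
    case False
    have "0 \<le> a + 2*(-(a+1)/(2*b))*b + (-(a+1)/(2*b))^2*c" using assms(1) by blast
    thus ?thesis using False True by (simp add: field_simps)
  qed (simp add: True)
next
  case False
  hence c: "c > 0" using assms(2) by simp
  have "0 \<le> a + 2*(-b/c)*b + (-b/c)^2*c" using assms(1) by blast
  hence "0 \<le> a - b^2/c" using c by (simp add: field_simps power2_eq_square)
  thus ?thesis using c by (simp add: field_simps)
qed

lemma bf_mv: "bf n A u v = dotT n u (mv n A v)"
  unfolding bf_def dotT_def mv_def by (simp add: sum_distrib_left mult_ac)

lemma bf_sym: assumes "\<forall>i<n. \<forall>j<n. A$$(i,j) = A$$(j,i)" shows "bf n A u v = bf n A v u"
  unfolding bf_def using assms by (subst sum.swap) (auto intro!: sum.cong simp: mult_ac)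

lemma bf_expand: assumes "\<forall>i<n. \<forall>j<n. A$$(i,j) = A$$(j,i)"
  shows "bf n A (\<lambda>i. u i + s * v i) (\<lambda>i. u i + s * v i) = bf n A u u + 2 * s * bf n A u v + s^2 * bf n A v v"
proof -
  have "bf n A (\<lambda>i. u i + s * v i) (\<lambda>i. u i + s * v i) = bf n A u u + s * bf n A u v + s * bf n A v u + s^2 * bf n A v v"
    unfolding bf_def by (simp add: algebra_simps sum.distrib sum_distrib_left power2_eq_square)
  thus ?thesis using bf_sym[OF assms, of v u] by simp
qed

lemma bf_CS: assumes "\<forall>i<n. \<forall>j<n. A$$(i,j) = A$$(j,i)" "\<forall>w. 0 \<le> bf n A w w"
  shows "(bf n A u v)^2 \<le> bf n A u u * bf n A v v"
proof (rule discr)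
  show "\<forall>t. 0 \<le> bf n A u u + 2 * t * bf n A u v + t^2 * bf n A v v"
  proof
    fix t
    show "0 \<le> bf n A u u + 2 * t * bf n A u v + t^2 * bf n A v v"
      using assms(2) bf_expand[OF assms(1), of u t v] by metis
  qed
qed (use assms(2) in blast)

lemma sq_le_dotT: "i < n \<Longrightarrow> (w i)^2 \<le> dotT n w w"
  unfolding dotT_def power2_eq_square[symmetric] by (rule member_le_sum) auto

lemma bf_bound: "bf n A w w \<le> (\<Sum>i<n. \<Sum>j<n. \<bar>A$$(i,j)\<bar>) * dotT n w w"
proof -
  have "bf n A w w \<le> (\<Sum>i<n. \<Sum>j<n. \<bar>A$$(i,j)\<bar> * dotT n w w)"
    unfolding bf_def
  proof (intro sum_mono)
    fix i j assume i: "i \<in> {..<n}" and j: "j \<in> {..<n}"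
    have "\<bar>w i * w j\<bar> \<le> ((w i)^2 + (w j)^2)/2"
    proof -
      have "0 \<le> (\<bar>w i\<bar> - \<bar>w j\<bar>)^2" by simp
      hence "0 \<le> (w i)^2 - 2 * \<bar>w i\<bar> * \<bar>w j\<bar> + (w j)^2" by (simp add: power2_diff)
      thus ?thesis by (simp add: abs_mult)
    qed
    also have "\<dots> \<le> dotT n w w" using sq_le_dotT[of i n w] sq_le_dotT[of j n w] i j by simp
    finally have "\<bar>w i * w j\<bar> \<le> dotT n w w" .
    hence "\<bar>A$$(i,j)\<bar> * \<bar>w i * w j\<bar> \<le> \<bar>A$$(i,j)\<bar> * dotT n w w" by (simp add: mult_left_mono)
    moreover have "w i * A $$ (i, j) * w j \<le> \<bar>A$$(i,j)\<bar> * \<bar>w i * w j\<bar>"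
      by (metis abs_ge_self abs_mult mult.commute mult.left_commute)
    ultimately show "w i * A $$ (i, j) * w j \<le> \<bar>A$$(i,j)\<bar> * dotT n w w" by linarith
  qed
  thus ?thesis by (simp add: sum_distrib_right)
qed

lemma lambda_min_le: assumes A: "(A::real mat) \<in> carrier_mat n n" and ev: "eigenvalue A t"
  shows "lambda_min A \<le> t"
proof -
  have "{k. eigenvalue A k} = {k. poly (char_poly A) k = 0}"
    using eigenvalue_root_char_poly[OF A] by auto
  moreover have "char_poly A \<noteq> 0" using degree_monic_char_poly[OF A] by auto
  ultimately have "finite {k. eigenvalue A k}" using poly_roots_finite by simp
  thus ?thesis unfolding lambda_min_def using ev by (intro Min_le) auto
qed

lemma rayleigh:
  fixes A :: "real mat"
  assumes A: "A \<in> carrier_mat n n" and n: "0 < n"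
    and sym: "\<forall>i<n. \<forall>j<n. A$$(i,j) = A$$(j,i)"
    and psd: "\<forall>v. 0 \<le> bf n A v v"
  shows "lambda_min A * dotT n v v \<le> bf n A v v"
proof -
  define R where "R = {t. \<forall>v. t * dotT n v v \<le> bf n A v v}"
  have R0: "0 \<in> R" unfolding R_def using psd by simp
  have u0: "dotT n (unitv 0) (unitv 0) = 1" using n by (simp add: dotT_unitv) (simp add: unitv_def)
  have bdd: "bdd_above R"
  proof (rule bdd_aboveI)
    fix t assume "t \<in> R"
    hence "t * dotT n (unitv 0) (unitv 0) \<le> bf n A (unitv 0) (unitv 0)" unfolding R_def by blast
    thus "t \<le> \<bar>bf n A (unitv 0) (unitv 0)\<bar>" using u0 by simp
  qed
  define ts where "ts = Sup R"
  have tsR: "ts \<in> R" unfolding R_def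
  proof (intro CollectI allI)
    fix v
    show "ts * dotT n v v \<le> bf n A v v"
    proof (cases "dotT n v v = 0")
      case True thus ?thesis using psd by simp
    next
      case False
      hence d: "dotT n v v > 0" using dotT_nonneg[of n v] by linarith
      have "ts \<le> bf n A v v / dotT n v v" unfolding ts_def
      proof (rule cSup_least)
        show "R \<noteq> {}" using R0 by blast
        fix t assume "t \<in> R"
        hence "t * dotT n v v \<le> bf n A v v" unfolding R_def by blast
        thus "t \<le> bf n A v v / dotT n v v" using d by (simp add: field_simps)
      qed
      thus ?thesis using d by (simp add: field_simps)
    qed
  qed
  have "eigenvalue A ts"
  proof (rule ccontr)
    assume "\<not> eigenvalue A ts"
    hence det: "det (char_matrix A ts) \<noteq> 0" using eigenvalue_det[OF A] by simp
    define M where "M = char_matrix A ts"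
    have M: "M \<in> carrier_mat n n" unfolding M_def using A by simp
    have Mij: "M $$ (i,j) = A $$ (i,j) - (if i = j then ts else 0)" if "i < n" "j < n" for i j
      unfolding M_def char_matrix_def using A that by auto
    from det_non_zero_imp_unit[OF M det[folded M_def], unfolded Units_def, of "()"]
    obtain N where N: "N \<in> carrier_mat n n" and NM: "N * M = 1\<^sub>m n"
      by (auto simp: ring_mat_def)
    have NMij: "(\<Sum>k<n. N $$ (i,k) * M $$ (k,j)) = (if i = j then 1 else 0)" if "i < n" "j < n" for i j
    proof -
      have "(N * M) $$ (i,j) = (\<Sum>k<n. N $$ (i,k) * M $$ (k,j))"
        using N M that by (simp add: scalar_prod_def atLeast0LessThan)
      thus ?thesis using NM that by simp
    qed
    have Msym: "\<forall>i<n. \<forall>j<n. M$$(i,j) = M$$(j,i)" using sym Mij by auto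
    have bfM: "bf n M v v = bf n A v v - ts * dotT n v v" for v
    proof -
      have "bf n M v v = (\<Sum>i<n. \<Sum>j<n. v i * A $$ (i,j) * v j - (if i = j then ts * v i * v j else 0))"
        unfolding bf_def by (intro sum.cong refl) (auto simp: Mij algebra_simps)
      also have "\<dots> = bf n A v v - ts * dotT n v v"
        unfolding bf_def dotT_def by (simp add: sum_subtractf sum.delta sum_distrib_left mult_ac)
      finally show ?thesis .
    qed
    have Mpsd: "\<forall>w. 0 \<le> bf n M w w" using tsR unfolding R_def bfM by simp
    define G where "G = (\<Sum>i<n. \<Sum>j<n. \<bar>M$$(i,j)\<bar>)"
    define F where "F = (\<Sum>i<n. \<Sum>k<n. (N$$(i,k))^2)"
    have G0: "0 \<le> G" unfolding G_def by (intro sum_nonneg) auto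
    have F0: "0 \<le> F" unfolding F_def by (intro sum_nonneg) auto
    have key: "dotT n v v \<le> F * G * bf n M v v" for v
    proof -
      define w where "w = mv n M v"
      define p where "p = dotT n w w"
      have vi: "v i = (\<Sum>k<n. N $$ (i,k) * w k)" if i: "i < n" for i
      proof -
        have "(\<Sum>k<n. N $$ (i,k) * w k) = (\<Sum>k<n. \<Sum>j<n. N $$ (i,k) * M $$ (k,j) * v j)"
          unfolding w_def mv_def by (simp add: sum_distrib_left mult.assoc)
        also have "\<dots> = (\<Sum>j<n. \<Sum>k<n. N $$ (i,k) * M $$ (k,j) * v j)"
          by (rule sum.swap)
        also have "\<dots> = (\<Sum>j<n. (\<Sum>k<n. N $$ (i,k) * M $$ (k,j)) * v j)"
          by (simp add: sum_distrib_right)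
        also have "\<dots> = (\<Sum>j<n. (if i = j then v j else 0))"
          by (intro sum.cong refl) (simp add: NMij i)
        also have "\<dots> = v i" using i by (simp add: sum.delta)
        finally show ?thesis by simp
      qed
      have "dotT n v v \<le> (\<Sum>i<n. (\<Sum>k<n. (N$$(i,k))^2) * p)"
        unfolding dotT_def p_def
      proof (intro sum_mono)
        fix i assume "i \<in> {..<n}"
        hence "v i * v i = (\<Sum>k<n. N $$ (i,k) * w k)^2" using vi by (simp add: power2_eq_square)
        also have "\<dots> \<le> (\<Sum>k<n. (N $$ (i,k))^2) * (\<Sum>k<n. (w k)^2)" by (rule Cauchy_Schwarz_ineq_sum)
        finally show "v i * v i \<le> (\<Sum>k<n. (N$$(i,k))^2) * (\<Sum>i<n. w i * w i)"
          by (simp add: power2_eq_square)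
      qed
      hence dv: "dotT n v v \<le> F * p" unfolding F_def by (simp add: sum_distrib_right)
      have "p \<le> G * bf n M v v"
      proof (cases "p = 0")
        case True thus ?thesis using G0 Mpsd by simp
      next
        case False
        hence pp: "p > 0" using dotT_nonneg[of n w] unfolding p_def by linarith
        have "bf n M w v = p" unfolding p_def w_def by (simp add: bf_mv)
        hence "p^2 \<le> bf n M w w * bf n M v v" using bf_CS[OF Msym Mpsd, of w v] by simp
        also have "\<dots> \<le> (G * p) * bf n M v v"
          using bf_bound[of n M w] Mpsd unfolding G_def p_def by (intro mult_right_mono) auto
        finally have "p * p \<le> p * (G * bf n M v v)" by (simp add: power2_eq_square mult_ac)
        thus ?thesis using pp by simp
      qed
      hence "F * p \<le> F * (G * bf n M v v)" using F0 by (rule mult_left_mono)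
      thus ?thesis using dv by (simp add: mult_ac)
    qed
    have "1 \<le> F * G * bf n M (unitv 0) (unitv 0)" using key[of "unitv 0"] u0 by simp
    hence "F * G \<noteq> 0" by auto
    hence FG: "F * G > 0" using F0 G0 by (simp add: less_le)
    have "ts + 1 / (F * G) \<in> R" unfolding R_def
    proof (intro CollectI allI)
      fix v
      have "dotT n v v / (F * G) \<le> bf n M v v" using key[of v] FG by (simp add: field_simps)
      thus "(ts + 1 / (F * G)) * dotT n v v \<le> bf n A v v" using bfM[of v] by (simp add: field_simps)
    qed
    hence "ts + 1 / (F * G) \<le> ts" unfolding ts_def using bdd by (rule cSup_upper)
    thus False using FG by simp
  qed
  hence "lambda_min A \<le> ts" using lambda_min_le[OF A] by blast
  hence "lambda_min A * dotT n v v \<le> ts * dotT n v v" using dotT_nonneg by (rule mult_right_mono)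
  also have "\<dots> \<le> bf n A v v" using tsR unfolding R_def by blast
  finally show ?thesis .
qed

lemma int_bdd: fixes f :: "'a \<Rightarrow> real" assumes "\<forall>x\<in>set_pmf p. \<bar>f x\<bar> \<le> B"
  shows "integrable (measure_pmf p) f"
  by (rule measure_pmf.integrable_const_bound[where B=B]) (use assms in \<open>auto simp: AE_measure_pmf_iff measurable_pmf_measure1\<close>)

lemma pmf_integral_indicator: "measure_pmf.expectation p (indicator E :: 'a \<Rightarrow> real) = measure_pmf.prob p E"
  by simp

lemma unit_dot: fixes u v :: "real vec" assumes "u \<in> carrier_vec m" "v \<in> carrier_vec m" "u \<bullet> u = 1" "v \<bullet> v = 1"
  shows "\<bar>u \<bullet> v\<bar> \<le> 1"
proof -
  have sp: "a \<bullet> b = (\<Sum>i<m. a $ i * b $ i)" if "b \<in> carrier_vec m" for a b :: "real vec"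
    using that by (simp add: scalar_prod_def atLeast0LessThan)
  define a where "a = (\<lambda>i. u $ i)"
  define b where "b = (\<lambda>i. v $ i)"
  have uu: "(\<Sum>i<m. a i * a i) = 1" using assms sp[of u u] unfolding a_def by simp
  have vv: "(\<Sum>i<m. b i * b i) = 1" using assms sp[of v v] unfolding b_def by simp
  have uv: "u \<bullet> v = (\<Sum>i<m. a i * b i)" using assms sp[of v u] unfolding a_def b_def by simp
  have "0 \<le> (\<Sum>i<m. (a i - b i)^2)" by (intro sum_nonneg) auto
  also have "(\<Sum>i<m. (a i - b i)^2) = (\<Sum>i<m. a i * a i) - 2 * (\<Sum>i<m. a i * b i) + (\<Sum>i<m. b i * b i)"
    by (simp add: power2_eq_square algebra_simps sum.distrib sum_subtractf sum_distrib_left)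
  finally have 1: "u \<bullet> v \<le> 1" using uu vv uv by simp
  have "0 \<le> (\<Sum>i<m. (a i + b i)^2)" by (intro sum_nonneg) auto
  also have "(\<Sum>i<m. (a i + b i)^2) = (\<Sum>i<m. a i * a i) + 2 * (\<Sum>i<m. a i * b i) + (\<Sum>i<m. b i * b i)"
    by (simp add: power2_eq_square algebra_simps sum.distrib sum_distrib_left)
  finally have 2: "-1 \<le> u \<bullet> v" using uu vv uv by simp
  show ?thesis using 1 2 by simp
qed

locale cfg =
  fixes T m :: nat and Eq Ed :: "nat \<Rightarrow> real vec" and D :: "(nat list \<times> nat list) pmf"
  assumes Tpos: "T > 0"
    and Eq: "\<forall>t<T. Eq t \<in> carrier_vec m \<and> Eq t \<bullet> Eq t = 1"
    and Ed: "\<forall>t<T. Ed t \<in> carrier_vec m \<and> Ed t \<bullet> Ed t = 1"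
    and valid: "\<forall>qd \<in> set_pmf D. valid_pair T qd"
begin

definition X :: "nat list \<times> nat list \<Rightarrow> nat \<Rightarrow> real" where
  "X qd = (\<lambda>t. feature T Eq Ed qd $ t)"

definition r :: "nat list \<times> nat list \<Rightarrow> real" where
  "r qd = 1 / real (length (fst qd))"

abbreviation AA where "AA \<equiv> moment_matrix T Eq Ed D"

lemma r_nonneg: "0 \<le> r qd" unfolding r_def by simp

lemma r_le1: "r qd \<le> 1" unfolding r_def by (cases "length (fst qd)") auto

lemma r_len: "r qd * real (length (fst qd)) \<le> 1" unfolding r_def by (cases "length (fst qd)") auto

lemma X_bound: assumes qd: "qd \<in> set_pmf D" and t: "t < T" shows "\<bar>X qd t\<bar> \<le> 1"
proof (cases "t \<in> set (fst qd)")
  case False thus ?thesis using t unfolding X_def feature_def by simp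
next
  case True
  define f where "f = (\<lambda>j. Eq t \<bullet> Ed (snd qd ! j))"
  have v: "valid_pair T qd" using valid qd by blast
  hence ne: "snd qd \<noteq> []" unfolding valid_pair_def by simp
  have "Max (f ` {..<length (snd qd)}) \<in> f ` {..<length (snd qd)}"
    by (rule Max_in) (use ne in auto)
  then obtain j where j: "j < length (snd qd)" and mx: "Max (f ` {..<length (snd qd)}) = f j" by auto
  have "snd qd ! j \<in> set (snd qd)" using j by simp
  hence dj: "snd qd ! j < T" using v unfolding valid_pair_def by auto
  have "\<bar>f j\<bar> \<le> 1" unfolding f_def by (rule unit_dot[of _ m]) (use Eq Ed t dj in auto)
  moreover have "X qd t = Max (f ` {..<length (snd qd)})" using True t unfolding X_def feature_def f_def by simp
  ultimately show ?thesis using mx by simp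
qed

lemma X_norm: assumes qd: "qd \<in> set_pmf D" shows "dotT T (X qd) (X qd) \<le> real (length (fst qd))"
proof -
  have "dotT T (X qd) (X qd) \<le> (\<Sum>t<T. if t \<in> set (fst qd) then 1 else 0)"
    unfolding dotT_def
  proof (intro sum_mono)
    fix t assume t: "t \<in> {..<T}"
    show "X qd t * X qd t \<le> (if t \<in> set (fst qd) then 1 else 0)"
    proof (cases "t \<in> set (fst qd)")
      case True
      have "\<bar>X qd t\<bar> * \<bar>X qd t\<bar> \<le> 1 * 1" using X_bound[OF qd, of t] t by (intro mult_mono) auto
      thus ?thesis using True by (simp add: abs_mult[symmetric])
    next
      case False thus ?thesis using t unfolding X_def feature_def by simp
    qed
  qed
  also have "(\<Sum>t<T. if t \<in> set (fst qd) then 1 else 0) = real (card {t\<in>{..<T}. t \<in> set (fst qd)})"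
    by (simp add: sum.inter_filter[symmetric])
  also have "card {t\<in>{..<T}. t \<in> set (fst qd)} \<le> card (set (fst qd))"
    by (rule card_mono) auto
  also have "card (set (fst qd)) \<le> length (fst qd)" by (rule card_length)
  finally show ?thesis by simp
qed

lemma rX_bound: assumes qd: "qd \<in> set_pmf D" shows "r qd * dotT T (X qd) (X qd) \<le> 1"
proof -
  have "r qd * dotT T (X qd) (X qd) \<le> r qd * real (length (fst qd))"
    using X_norm[OF qd] r_nonneg by (rule mult_left_mono)
  also have "\<dots> \<le> 1" by (rule r_len)
  finally show ?thesis .
qed

lemma A_carrier: "AA \<in> carrier_mat T T" unfolding moment_matrix_def by simp

lemma A_entry: "i < T \<Longrightarrow> j < T \<Longrightarrow> AA $$ (i,j) = measure_pmf.expectation D (\<lambda>qd. r qd * X qd i * X qd j)"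
  unfolding moment_matrix_def X_def r_def by simp

lemma A_sym: "\<forall>i<T. \<forall>j<T. AA $$ (i,j) = AA $$ (j,i)"
  by (simp add: A_entry mult_ac)

lemma dot_X_bound: assumes qd: "qd \<in> set_pmf D" shows "\<bar>dotT T w (X qd)\<bar> \<le> (\<Sum>i<T. \<bar>w i\<bar>)"
proof -
  have "\<bar>dotT T w (X qd)\<bar> \<le> (\<Sum>i<T. \<bar>w i * X qd i\<bar>)" unfolding dotT_def by (rule sum_abs)
  also have "\<dots> \<le> (\<Sum>i<T. \<bar>w i\<bar>)"
  proof (intro sum_mono)
    fix i assume "i \<in> {..<T}"
    hence "\<bar>X qd i\<bar> \<le> 1" using X_bound[OF qd] by simp
    thus "\<bar>w i * X qd i\<bar> \<le> \<bar>w i\<bar>" by (simp add: abs_mult mult_left_le)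
  qed
  finally show ?thesis .
qed

lemma int_quad: "integrable (measure_pmf D) (\<lambda>qd. r qd * (dotT T w (X qd))^2)"
proof (rule int_bdd[where B="(\<Sum>i<T. \<bar>w i\<bar>)^2"], intro ballI)
  fix qd assume qd: "qd \<in> set_pmf D"
  have "(dotT T w (X qd))^2 \<le> (\<Sum>i<T. \<bar>w i\<bar>)^2"
    using dot_X_bound[OF qd, of w] by (metis abs_le_square_iff abs_sum_abs)
  hence "r qd * (dotT T w (X qd))^2 \<le> 1 * (\<Sum>i<T. \<bar>w i\<bar>)^2"
    by (intro mult_mono r_le1) auto
  thus "\<bar>r qd * (dotT T w (X qd))^2\<bar> \<le> (\<Sum>i<T. \<bar>w i\<bar>)^2" using r_nonneg by simp
qed

lemma int_entry: "integrable (measure_pmf D) (\<lambda>qd. c * (r qd * X qd i * X qd j))" if "i < T" "j < T"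
proof (rule int_bdd[where B="\<bar>c\<bar>"], intro ballI)
  fix qd assume qd: "qd \<in> set_pmf D"
  have "\<bar>r qd * X qd i * X qd j\<bar> \<le> 1 * 1 * 1"
    unfolding abs_mult using X_bound[OF qd] that r_le1 r_nonneg by (intro mult_mono) auto
  thus "\<bar>c * (r qd * X qd i * X qd j)\<bar> \<le> \<bar>c\<bar>" by (simp add: abs_mult mult_left_le)
qed

lemma bf_expect: "bf T AA v v = measure_pmf.expectation D (\<lambda>qd. r qd * (dotT T v (X qd))^2)"
proof -
  have "bf T AA v v = (\<Sum>i<T. \<Sum>j<T. measure_pmf.expectation D (\<lambda>qd. (v i * v j) * (r qd * X qd i * X qd j)))"
    unfolding bf_def by (intro sum.cong refl, subst integral_mult_right_zero) (simp add: A_entry)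
  also have "\<dots> = (\<Sum>i<T. measure_pmf.expectation D (\<lambda>qd. \<Sum>j<T. (v i * v j) * (r qd * X qd i * X qd j)))"
  proof (intro sum.cong refl)
    fix i assume i: "i \<in> {..<T}"
    show "(\<Sum>j<T. measure_pmf.expectation D (\<lambda>qd. (v i * v j) * (r qd * X qd i * X qd j))) = measure_pmf.expectation D (\<lambda>qd. \<Sum>j<T. (v i * v j) * (r qd * X qd i * X qd j))"
      by (rule Bochner_Integration.integral_sum[where I="{..<T}" and f="\<lambda>j qd. (v i * v j) * (r qd * X qd i * X qd j)", symmetric]) (rule int_entry, insert i, auto)
  qed
  also have "\<dots> = measure_pmf.expectation D (\<lambda>qd. \<Sum>i<T. \<Sum>j<T. (v i * v j) * (r qd * X qd i * X qd j))"
    by (rule Bochner_Integration.integral_sum[where I="{..<T}" and f="\<lambda>i qd. \<Sum>j<T. (v i * v j) * (r qd * X qd i * X qd j)", symmetric]) (rule Bochner_Integration.integrable_sum, rule int_entry, auto)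
  also have "\<dots> = measure_pmf.expectation D (\<lambda>qd. r qd * (dotT T v (X qd))^2)"
  proof (intro Bochner_Integration.integral_cong refl)
    fix qd
    show "(\<Sum>i<T. \<Sum>j<T. (v i * v j) * (r qd * X qd i * X qd j)) = r qd * (dotT T v (X qd))^2"
    proof -
      have "r qd * (dotT T v (X qd))^2 = r qd * ((\<Sum>i<T. v i * X qd i) * (\<Sum>j<T. v j * X qd j))"
        unfolding dotT_def power2_eq_square ..
      also have "\<dots> = (\<Sum>i<T. \<Sum>j<T. r qd * ((v i * X qd i) * (v j * X qd j)))"
        unfolding sum_product by (simp only: sum_distrib_left)
      also have "\<dots> = (\<Sum>i<T. \<Sum>j<T. (v i * v j) * (r qd * X qd i * X qd j))"
        by (intro sum.cong refl) (simp add: mult_ac)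
      finally show ?thesis by simp
    qed
  qed
  finally show ?thesis .
qed

lemma A_psd: "\<forall>v. 0 \<le> bf T AA v v"
  by (auto simp: bf_expect intro!: integral_nonneg_AE AE_pmfI mult_nonneg_nonneg r_nonneg)

lemma ray: "lambda_min AA * dotT T v v \<le> bf T AA v v"
  by (rule rayleigh[OF A_carrier Tpos A_sym A_psd])

end

lemma prob_bind_pmf: "measure_pmf.prob (bind_pmf M f) A = measure_pmf.expectation M (\<lambda>x. measure_pmf.prob (f x) A)"
  unfolding measure_pmf_bind
  by (rule measure_pmf.measure_bind[where N="count_space UNIV" and f="\<lambda>x. measure_pmf (f x)"]) (auto simp: measurable_pmf_measure1 measure_pmf_in_subprob_algebra)

lemma prob_rep_Suc: "measure_pmf.prob (replicate_pmf (Suc n) D) A =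
  measure_pmf.expectation D (\<lambda>x. measure_pmf.prob (replicate_pmf n D) {xs. x # xs \<in> A})"
proof -
  have "replicate_pmf (Suc n) D = bind_pmf D (\<lambda>x. map_pmf (\<lambda>xs. x # xs) (replicate_pmf n D))"
    by (simp add: map_pmf_def)
  then show ?thesis by (simp add: prob_bind_pmf vimage_def)
qed

lemma prob_le1: "\<bar>measure_pmf.prob p A\<bar> \<le> 1"
  using measure_pmf.prob_le_1[of p A] by simp

context cfg
begin

lemma g_le: assumes ON: "ONL T U" and qd: "qd \<in> set_pmf D"
  shows "r qd * dotT T (proj T U (X qd)) (proj T U (X qd)) \<le> 1"
proof -
  have "dotT T (proj T U (X qd)) (proj T U (X qd)) \<le> dotT T (X qd) (X qd)"
    using proj_norm[OF ON, of "X qd"] by (simp add: sum_nonneg)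
  hence "r qd * dotT T (proj T U (X qd)) (proj T U (X qd)) \<le> r qd * dotT T (X qd) (X qd)"
    using r_nonneg by (rule mult_left_mono)
  also have "\<dots> \<le> 1" by (rule rX_bound[OF qd])
  finally show ?thesis .
qed

lemma H: assumes ON: "ONL T U"
  shows "(real T - real (length U)) * lambda_min AA \<le>
    measure_pmf.prob D {qd. dotT T (proj T U (X qd)) (proj T U (X qd)) \<noteq> 0}"
proof -
  define E where "E = {qd. dotT T (proj T U (X qd)) (proj T U (X qd)) \<noteq> 0}"
  define pe where "pe i = proj T U (unitv i)" for i
  define g where "g = (\<lambda>qd. r qd * dotT T (proj T U (X qd)) (proj T U (X qd)))"
  have g_eq: "g qd = (\<Sum>i<T. r qd * (dotT T (pe i) (X qd))^2)" for qd
  proof -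
    have "dotT T (proj T U (X qd)) (proj T U (X qd)) = (\<Sum>i<T. (dotT T (pe i) (X qd))^2)"
      unfolding dotT_def[of T "proj T U (X qd)" "proj T U (X qd)"] pe_def
      by (intro sum.cong refl) (simp add: proj_sym power2_eq_square)
    thus ?thesis unfolding g_def by (simp add: sum_distrib_left)
  qed
  have "measure_pmf.expectation D g = measure_pmf.expectation D (\<lambda>qd. \<Sum>i<T. r qd * (dotT T (pe i) (X qd))^2)"
    by (intro Bochner_Integration.integral_cong refl g_eq)
  also have "\<dots> = (\<Sum>i<T. measure_pmf.expectation D (\<lambda>qd. r qd * (dotT T (pe i) (X qd))^2))"
    by (rule Bochner_Integration.integral_sum[where I="{..<T}" and f="\<lambda>i qd. r qd * (dotT T (pe i) (X qd))^2"]) (rule int_quad)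
  also have "\<dots> = (\<Sum>i<T. bf T AA (pe i) (pe i))" by (simp add: bf_expect)
  finally have Eg: "measure_pmf.expectation D g = (\<Sum>i<T. bf T AA (pe i) (pe i))" .
  have "(real T - real (length U)) * lambda_min AA = lambda_min AA * (\<Sum>i<T. dotT T (pe i) (pe i))"
    unfolding pe_def proj_trace[OF ON] by simp
  also have "\<dots> = (\<Sum>i<T. lambda_min AA * dotT T (pe i) (pe i))" by (simp add: sum_distrib_left)
  also have "\<dots> \<le> (\<Sum>i<T. bf T AA (pe i) (pe i))" by (intro sum_mono ray)
  also have "\<dots> = measure_pmf.expectation D g" using Eg by simp
  also have "\<dots> \<le> measure_pmf.expectation D (indicator E)"
  proof (rule integral_mono_AE)
    have gb: "0 \<le> g qd \<and> g qd \<le> 1" if "qd \<in> set_pmf D" for qd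
      unfolding g_def using g_le[OF ON that] r_nonneg dotT_nonneg by (simp add: mult_nonneg_nonneg)
    show "integrable (measure_pmf D) g" by (rule int_bdd[where B=1]) (use gb in auto)
    show "integrable (measure_pmf D) (indicator E :: _ \<Rightarrow> real)" by (rule int_bdd[where B=1]) (auto simp: indicator_def)
    show "AE x in measure_pmf D. g x \<le> indicator E x"
    proof (rule AE_pmfI)
      fix qd assume qd: "qd \<in> set_pmf D"
      show "g qd \<le> indicator E qd"
        using gb[OF qd] unfolding E_def g_def by (auto simp: indicator_def)
    qed
  qed
  also have "\<dots> = measure_pmf.prob D E" by (rule pmf_integral_indicator)
  finally show ?thesis unfolding E_def .
qed

definition fail :: "(nat \<Rightarrow> real) list \<Rightarrow> (nat list \<times> nat list) list \<Rightarrow> bool" where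
  "fail U S \<longleftrightarrow> (\<exists>v. (\<forall>k<length U. dotT T v (U!k) = 0) \<and> (\<forall>x\<in>set S. dotT T v (X x) = 0) \<and> (\<exists>i<T. v i \<noteq> 0))"

lemma fail_full: assumes "ONL T U" "length U = T" shows "\<not> fail U S"
  using ONL_full[OF assms] unfolding fail_def by blast

lemma main_ind: "ONL T U \<Longrightarrow>
  measure_pmf.prob (replicate_pmf n D) {S. fail U S} \<le> (real T - real (length U)) * (1 - lambda_min AA)^n"
proof (induction n arbitrary: U)
  case 0
  show ?case
  proof (cases "length U = T")
    case True
    hence "{S. fail U S} = {}" using fail_full[OF 0] by blast
    thus ?thesis using True by simp
  next
    case False
    hence "length U < T" using ONL_length[OF 0] by simp
    hence "1 \<le> real T - real (length U)" by simp
    moreover have "measure_pmf.prob (replicate_pmf 0 D) {S. fail U S} \<le> 1" by (rule measure_pmf.prob_le_1)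
    ultimately show ?thesis by (metis order_trans mult.right_neutral power_0)
  qed
next
  case (Suc n)
  define c where "c = 1 - lambda_min AA"
  define k where "k = real T - real (length U)"
  show ?case
  proof (cases "length U = T")
    case True
    hence "{S. fail U S} = {}" using fail_full[OF Suc.prems] by blast
    thus ?thesis using True by simp
  next
    case False
    hence "length U < T" using ONL_length[OF Suc.prems] by simp
    hence k1: "1 \<le> k" unfolding k_def by simp
    define E where "E = {qd. dotT T (proj T U (X qd)) (proj T U (X qd)) \<noteq> 0}"
    have HE: "k * lambda_min AA \<le> measure_pmf.prob D E" using H[OF Suc.prems] unfolding E_def k_def .
    have "measure_pmf.prob D E \<le> 1" by (rule measure_pmf.prob_le_1)
    have lam1: "lambda_min AA \<le> 1"
    proof (rule ccontr)
      assume "\<not> lambda_min AA \<le> 1"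
      hence "1 * lambda_min AA \<le> k * lambda_min AA" using k1 by (intro mult_right_mono) auto
      hence "lambda_min AA \<le> k * lambda_min AA" by simp
      thus False using HE \<open>measure_pmf.prob D E \<le> 1\<close> \<open>\<not> lambda_min AA \<le> 1\<close> by linarith
    qed
    hence c0: "0 \<le> c" unfolding c_def by simp
    have step: "measure_pmf.prob (replicate_pmf n D) {xs. x # xs \<in> {S. fail U S}} \<le> k * c^n - indicator E x * c^n"
      if x: "x \<in> set_pmf D" for x
    proof (cases "x \<in> E")
      case False
      hence z: "dotT T (proj T U (X x)) (proj T U (X x)) = 0" unfolding E_def by simp
      have "{xs. x # xs \<in> {S. fail U S}} = {S. fail U S}"
        unfolding fail_def using proj_zero_perp[OF z] by auto
      then show ?thesis using Suc.IH[OF Suc.prems] False unfolding k_def c_def by simp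
    next
      case True
      define d where "d = dotT T (proj T U (X x)) (proj T U (X x))"
      define u where "u = (\<lambda>i. proj T U (X x) i / sqrt d)"
      have ON': "ONL T (U @ [u])" using ONL_extend[OF Suc.prems] True unfolding E_def u_def d_def by simp
      have sub: "{xs. x # xs \<in> {S. fail U S}} \<subseteq> {S. fail (U @ [u]) S}"
      proof
        fix xs assume "xs \<in> {xs. x # xs \<in> {S. fail U S}}"
        then obtain v where v1: "\<forall>k<length U. dotT T v (U!k) = 0" and v2: "\<forall>y\<in>set (x # xs). dotT T v (X y) = 0"
          and v3: "\<exists>i<T. v i \<noteq> 0" unfolding fail_def by auto
        have "dotT T v u = dotT T v (proj T U (X x)) / sqrt d"
          unfolding u_def dotT_def by (simp add: sum_divide_distrib)
        also have "\<dots> = 0" using proj_perp[OF v1, of "X x"] v2 by simp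
        finally have vu: "dotT T v u = 0" .
        have "\<forall>k<length (U @ [u]). dotT T v ((U @ [u])!k) = 0"
        proof (intro allI impI)
          fix k assume "k < length (U @ [u])"
          thus "dotT T v ((U @ [u])!k) = 0" using v1 vu by (cases "k < length U") (auto simp: nth_append)
        qed
        thus "xs \<in> {S. fail (U @ [u]) S}" unfolding fail_def using v2 v3 by auto
      qed
      have "measure_pmf.prob (replicate_pmf n D) {xs. x # xs \<in> {S. fail U S}} \<le> measure_pmf.prob (replicate_pmf n D) {S. fail (U @ [u]) S}"
        by (rule measure_pmf.finite_measure_mono[OF sub]) simp
      also have "\<dots> \<le> (real T - real (length (U @ [u]))) * c^n" using Suc.IH[OF ON'] unfolding c_def .
      finally show ?thesis using True unfolding k_def by (simp add: algebra_simps)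
    qed
    have "measure_pmf.prob (replicate_pmf (Suc n) D) {S. fail U S} =
      measure_pmf.expectation D (\<lambda>x. measure_pmf.prob (replicate_pmf n D) {xs. x # xs \<in> {S. fail U S}})"
      by (rule prob_rep_Suc)
    also have "\<dots> \<le> measure_pmf.expectation D (\<lambda>x. k * c^n - indicator E x * c^n)"
    proof (rule integral_mono_AE)
      show "integrable (measure_pmf D) (\<lambda>x. measure_pmf.prob (replicate_pmf n D) {xs. x # xs \<in> {S. fail U S}})"
        by (rule int_bdd[where B=1]) (simp add: prob_le1)
      show "integrable (measure_pmf D) (\<lambda>x. k * c^n - indicator E x * c^n)"
        by (rule int_bdd[where B="\<bar>k * c^n\<bar> + \<bar>c^n\<bar>"]) (auto simp: indicator_def)
      show "AE x in measure_pmf D. measure_pmf.prob (replicate_pmf n D) {xs. x # xs \<in> {S. fail U S}} \<le> k * c^n - indicator E x * c^n"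
        by (rule AE_pmfI) (rule step)
    qed
    also have "\<dots> = k * c^n - measure_pmf.prob D E * c^n"
    proof -
      have ii: "integrable (measure_pmf D) (indicator E :: _ \<Rightarrow> real)" by (rule int_bdd[where B=1]) (auto simp: indicator_def)
      have "measure_pmf.expectation D (\<lambda>x. k * c^n - indicator E x * c^n) =
        measure_pmf.expectation D (\<lambda>x. k * c^n) - measure_pmf.expectation D (\<lambda>x. indicator E x * c^n)"
        by (rule Bochner_Integration.integral_diff) (auto intro: ii)
      also have "\<dots> = k * c^n - measure_pmf.prob D E * c^n"
        using pmf_integral_indicator[of D E] by simp
      finally show ?thesis .
    qed
    also have "\<dots> \<le> k * c^n - (k * lambda_min AA) * c^n"
      using mult_right_mono[OF HE zero_le_power[OF c0, of n]] by simp
    also have "\<dots> = k * c^(Suc n)" unfolding c_def by (simp add: algebra_simps)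
    finally show ?thesis unfolding k_def c_def .
  qed
qed

end

definition algo :: "(real vec \<times> real) list \<Rightarrow> real vec" where
  "algo L = (if L = [] then 0\<^sub>v 0 else
     (THE w'. w' \<in> carrier_vec (dim_vec (fst (hd L))) \<and> (\<forall>p\<in>set L. w' \<bullet> fst p = snd p)))"

lemma sp_carrier: "b \<in> carrier_vec T \<Longrightarrow> (a::real vec) \<bullet> b = (\<Sum>i<T. a $ i * b $ i)"
  by (simp add: scalar_prod_def atLeast0LessThan)

context cfg
begin

lemma algo_good:
  fixes w :: "real vec"
  assumes w: "w \<in> carrier_vec T" and S: "S \<noteq> []" and nf: "\<not> fail [] S"
  shows "algo (map (\<lambda>qd. (feature T Eq Ed qd, w \<bullet> feature T Eq Ed qd)) S) = w"
proof -
  define L where "L = map (\<lambda>qd. (feature T Eq Ed qd, w \<bullet> feature T Eq Ed qd)) S"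
  have Fc: "feature T Eq Ed qd \<in> carrier_vec T" for qd unfolding feature_def by simp
  have L: "L \<noteq> []" using S unfolding L_def by simp
  have dim: "dim_vec (fst (hd L)) = T" using S unfolding L_def by (cases S) (auto simp: feature_def)
  have "(THE w'. w' \<in> carrier_vec (dim_vec (fst (hd L))) \<and> (\<forall>p\<in>set L. w' \<bullet> fst p = snd p)) = w"
  proof (rule the_equality)
    show "w \<in> carrier_vec (dim_vec (fst (hd L))) \<and> (\<forall>p\<in>set L. w \<bullet> fst p = snd p)"
      using w dim unfolding L_def by auto
  next
    fix w' assume w': "w' \<in> carrier_vec (dim_vec (fst (hd L))) \<and> (\<forall>p\<in>set L. w' \<bullet> fst p = snd p)"
    hence w'c: "w' \<in> carrier_vec T" using dim by simp
    define v where "v = (\<lambda>i. w' $ i - w $ i)"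
    have "\<forall>x\<in>set S. dotT T v (X x) = 0"
    proof
      fix x assume x: "x \<in> set S"
      have eq: "w' \<bullet> feature T Eq Ed x = w \<bullet> feature T Eq Ed x" using w' x unfolding L_def by auto
      have "dotT T v (X x) = w' \<bullet> feature T Eq Ed x - w \<bullet> feature T Eq Ed x"
        unfolding dotT_def v_def X_def sp_carrier[OF Fc] by (simp add: left_diff_distrib sum_subtractf)
      thus "dotT T v (X x) = 0" using eq by simp
    qed
    hence "\<forall>i<T. v i = 0" using nf unfolding fail_def by auto
    thus "w' = w" using w w'c unfolding v_def by (intro eq_vecI) auto
  qed
  thus ?thesis using L unfolding algo_def L_def by simp
qed

lemma final:
  fixes w :: "real vec" and \<delta> :: real and n :: nat
  assumes w: "w \<in> carrier_vec T" and lam: "lambda_min AA > 0"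
    and d0: "0 < \<delta>" and d1: "\<delta> < 1"
    and n: "real n \<ge> 1 / lambda_min AA * ln (real T / \<delta>)"
  shows "measure_pmf.prob (replicate_pmf n D)
        {S. algo (map (\<lambda>qd. (feature T Eq Ed qd, w \<bullet> feature T Eq Ed qd)) S) = w} \<ge> 1 - \<delta>"
proof -
  define l where "l = lambda_min AA"
  have ON0: "ONL T []" by (simp add: ONL_def)
  have "real T * l \<le> measure_pmf.prob D {qd. dotT T (proj T [] (X qd)) (proj T [] (X qd)) \<noteq> 0}"
    using H[OF ON0] unfolding l_def by simp
  also have "\<dots> \<le> 1" by (rule measure_pmf.prob_le_1)
  finally have "real T * l \<le> 1" .
  moreover have "l \<le> real T * l" using Tpos lam unfolding l_def by simp
  ultimately have l1: "l \<le> 1" by simp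
  have Td: "real T / \<delta> > 1" using Tpos d0 d1 by (simp add: field_simps)
  hence lnpos: "ln (real T / \<delta>) > 0" by simp
  have ln_le: "ln (real T / \<delta>) \<le> l * real n"
    using n lam unfolding l_def by (simp add: field_simps)
  hence npos: "n > 0" using lnpos lam unfolding l_def by (cases n) auto
  have "(1 - l)^n \<le> exp (- l)^n"
    using exp_ge_add_one_self[of "-l"] l1 by (intro power_mono) auto
  also have "\<dots> = exp (- (l * real n))" by (simp add: exp_of_nat_mult[symmetric] mult.commute)
  also have "\<dots> \<le> exp (- ln (real T / \<delta>))" using ln_le by simp
  also have "\<dots> = \<delta> / real T" using Td d0 by (simp add: exp_minus)
  finally have pw: "(1 - l)^n \<le> \<delta> / real T" .
  have "measure_pmf.prob (replicate_pmf n D) {S. fail [] S} \<le> real T * (1 - l)^n"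
    using main_ind[OF ON0, of n] unfolding l_def by simp
  also have "\<dots> \<le> real T * (\<delta> / real T)" using pw by (intro mult_left_mono) auto
  also have "\<dots> = \<delta>" using Tpos by simp
  finally have pf: "measure_pmf.prob (replicate_pmf n D) {S. fail [] S} \<le> \<delta>" .
  have sub: "(UNIV - {S. fail [] S}) \<inter> set_pmf (replicate_pmf n D) \<subseteq>
     {S. algo (map (\<lambda>qd. (feature T Eq Ed qd, w \<bullet> feature T Eq Ed qd)) S) = w}"
  proof
    fix S assume S: "S \<in> (UNIV - {S. fail [] S}) \<inter> set_pmf (replicate_pmf n D)"
    hence "length S = n" by (simp add: set_replicate_pmf)
    hence "S \<noteq> []" using npos by auto
    thus "S \<in> {S. algo (map (\<lambda>qd. (feature T Eq Ed qd, w \<bullet> feature T Eq Ed qd)) S) = w}"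
      using algo_good[OF w] S by auto
  qed
  have "1 - \<delta> \<le> 1 - measure_pmf.prob (replicate_pmf n D) {S. fail [] S}" using pf by simp
  also have "\<dots> = measure_pmf.prob (replicate_pmf n D) (UNIV - {S. fail [] S})"
    using measure_pmf.prob_compl[of "{S. fail [] S}" "replicate_pmf n D"] by simp
  also have "\<dots> = measure_pmf.prob (replicate_pmf n D) ((UNIV - {S. fail [] S}) \<inter> set_pmf (replicate_pmf n D))"
    by (rule measure_Int_set_pmf[symmetric])
  also have "\<dots> \<le> measure_pmf.prob (replicate_pmf n D) {S. algo (map (\<lambda>qd. (feature T Eq Ed qd, w \<bullet> feature T Eq Ed qd)) S) = w}"
    by (rule measure_pmf.finite_measure_mono[OF sub]) simp
  finally show ?thesis .
qed

end

theorem theorem1: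
  shows "\<exists>C::real. C > 0 \<and> (\<exists>alg :: (real vec \<times> real) list \<Rightarrow> real vec.
    \<forall>(T::nat) (m::nat) (Eq :: nat \<Rightarrow> real vec) (Ed :: nat \<Rightarrow> real vec)
      (D :: (nat list \<times> nat list) pmf) (w :: real vec) (\<delta>::real) (n::nat).
      T > 0 \<longrightarrow>
      (\<forall>t<T. Eq t \<in> carrier_vec m \<and> Eq t \<bullet> Eq t = 1) \<longrightarrow>
      (\<forall>t<T. Ed t \<in> carrier_vec m \<and> Ed t \<bullet> Ed t = 1) \<longrightarrow>
      (\<forall>qd \<in> set_pmf D. valid_pair T qd) \<longrightarrow>
      w \<in> carrier_vec T \<longrightarrow>
      lambda_min (moment_matrix T Eq Ed D) > 0 \<longrightarrow>
      0 < \<delta> \<longrightarrow> \<delta> < 1 \<longrightarrow>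
      real n \<ge> C / lambda_min (moment_matrix T Eq Ed D) * ln (real T / \<delta>) \<longrightarrow>
      measure_pmf.prob (replicate_pmf n D)
        {S. alg (map (\<lambda>qd. (feature T Eq Ed qd, w \<bullet> feature T Eq Ed qd)) S) = w}
        \<ge> 1 - \<delta>)"
proof (intro exI[of _ "1::real"] conjI exI[of _ algo] allI impI)
  show "(1::real) > 0" by simp
  fix T m :: nat and Eq Ed :: "nat \<Rightarrow> real vec" and D :: "(nat list \<times> nat list) pmf"
    and w :: "real vec" and \<delta> :: real and n :: nat
  assume a: "T > 0" "\<forall>t<T. Eq t \<in> carrier_vec m \<and> Eq t \<bullet> Eq t = 1"
    "\<forall>t<T. Ed t \<in> carrier_vec m \<and> Ed t \<bullet> Ed t = 1" "\<forall>qd \<in> set_pmf D. valid_pair T qd"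
    "w \<in> carrier_vec T" "lambda_min (moment_matrix T Eq Ed D) > 0" "0 < \<delta>" "\<delta> < 1"
    "real n \<ge> 1 / lambda_min (moment_matrix T Eq Ed D) * ln (real T / \<delta>)"
  interpret cfg T m Eq Ed D by unfold_locales (use a in auto)
  show "measure_pmf.prob (replicate_pmf n D)
        {S. algo (map (\<lambda>qd. (feature T Eq Ed qd, w \<bullet> feature T Eq Ed qd)) S) = w} \<ge> 1 - \<delta>"
    by (rule final) (use a in auto)
qed

end
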